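(* Let $(A,\mathfrak{m})$ be a local ring and let $A\subset B$ be an integral extension of rings. Let $R(B)$ denote the Jacobson radical of $B$, and set $A' = A + R(B)\subset B$ and $\mathfrak{m}' = R(B)$. For each maximal ideal $\mathfrak{n}_i$ of $B$ let $\omega_i\colon A/\mathfrak{m}\to B/\mathfrak{n}_i$ be the canonical homomorphism. Then: (1) $(A',\mathfrak{m}')$ is a local ring and the canonical homomorphism $A/\mathfrak{m}\to A'/\mathfrak{m}'$ is an isomorphism; (2) $A'$ is the largest intermediate local ring with this property: if $C$ is a ring with $A\subset C\subset B$ which is local with maximal ideal $\mathfrak{n}$ and $A/\mathfrak{m}\cong C/\mathfrak{n}$ (via the canonical map), then $C\subset A'$; (3) an element $b\in B$ lies in $A'$ if and only if (a) for every maximal ideal $\mathfrak{n}_i$ of $B$, the image $b(x_i)$ of $b$ in $B/\mathfrak{n}_i$ lies in $\omega_i(A/\mathfrak{m})$, and (b) $\omega_i^{-1}(b(x_i)) = \omega_j^{-1}(b(x_j))$ for all $i,j$.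
   Context: All rings are commutative with identity. For a maximal ideal $\mathfrak{n}_i$ of $B$ corresponding to a closed point $x_i\in\mathrm{Spec}(B)$, $b(x_i)$ denotes the image of $b$ in the residue field $B/\mathfrak{n}_i$. *)

theory Defs
  imports "HOL-Algebra.Algebra"
begin

definition local_ring_with :: "('a, 'b) ring_scheme \<Rightarrow> 'a set \<Rightarrow> bool" where
  "local_ring_with R m \<longleftrightarrow> cring R \<and> maximalideal m R \<and>
     (\<forall>n. maximalideal n R \<longrightarrow> n = m)"

text \<open>b is integral over the subring A of R: root of a monic polynomial with
  coefficients in A (lists, leading coefficient first, as in HOL-Algebra.Polynomials).\<close>
definition integral_over :: "('a, 'b) ring_scheme \<Rightarrow> 'a set \<Rightarrow> 'a \<Rightarrow> bool" where
  "integral_over R A b \<longleftrightarrow>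
     (\<exists>p. p \<noteq> [] \<and> set p \<subseteq> A \<and> hd p = \<one>\<^bsub>R\<^esub> \<and> ring.eval R p b = \<zero>\<^bsub>R\<^esub>)"

definition integral_extension :: "('a, 'b) ring_scheme \<Rightarrow> 'a set \<Rightarrow> bool" where
  "integral_extension R A \<longleftrightarrow> subring A R \<and> (\<forall>b \<in> carrier R. integral_over R A b)"

definition jacobson_radical :: "('a, 'b) ring_scheme \<Rightarrow> 'a set" where
  "jacobson_radical R = carrier R \<inter> \<Inter> {n. maximalideal n R}"

text \<open>The canonical map between residue rings of subrings of R, sending the coset
  I + a to the coset J + a (for I \<subseteq> J): on cosets it is Y \<mapsto> J + Y.\<close>
definition res_map :: "('a, 'b) ring_scheme \<Rightarrow> 'a set \<Rightarrow> 'a set \<Rightarrow> 'a set" where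
  "res_map R J Y = set_add R J Y"

end

theory Submission
  imports Defs
begin
no_notation Sum_Type.Plus (infixr \<open><+>\<close> 65)


lemma (in ring) krull:
  assumes "ideal I R" "\<one> \<notin> I"
  shows "\<exists>M. maximalideal M R \<and> I \<subseteq> M"
proof -
  define S where "S = {J. ideal J R \<and> I \<subseteq> J \<and> \<one> \<notin> J}"
  have "\<exists>M\<in>S. \<forall>Y\<in>S. M \<subseteq> Y \<longrightarrow> Y = M"
  proof (rule subset_Zorn_nonempty)
    show "S \<noteq> {}" using assms S_def by blast
  next
    fix C assume C: "C \<noteq> {}" "subset.chain S C"
    have "subset.chain {I. ideal I R} C"
      using C(2) unfolding pred_on.chain_def S_def by auto
    from chain_Union_is_ideal[OF this] C(1) have "ideal (\<Union>C) R" by simp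
    moreover have "I \<subseteq> \<Union>C" "\<one> \<notin> \<Union>C" using C unfolding pred_on.chain_def S_def by blast+
    ultimately show "\<Union>C \<in> S" unfolding S_def by blast
  qed
  then obtain M where M: "M \<in> S" "\<And>Y. Y \<in> S \<Longrightarrow> M \<subseteq> Y \<Longrightarrow> Y = M" by blast
  have "maximalideal M R"
  proof (rule maximalidealI)
    show "ideal M R" using M S_def by blast
    show "carrier R \<noteq> M" using M S_def by blast
    fix J assume J: "ideal J R" "M \<subseteq> J" "J \<subseteq> carrier R"
    show "J = M \<or> J = carrier R"
    proof (cases "\<one> \<in> J")
      case True then show ?thesis using ideal.one_imp_carrier[OF J(1)] by blast
    next
      case False then have "J \<in> S" using J M(1) S_def by blast
      then show ?thesis using M(2) J by blast
    qed
  qed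
  then show ?thesis using M S_def by blast
qed

lemma (in cring) nonunit_in_max:
  assumes "x \<in> carrier R" "x \<notin> Units R"
  shows "\<exists>M. maximalideal M R \<and> x \<in> M"
proof -
  have "\<one> \<notin> PIdl x"
  proof
    assume "\<one> \<in> PIdl x"
    then obtain y where "y \<in> carrier R" "\<one> = y \<otimes> x" unfolding cgenideal_def by blast
    then have "x \<in> Units R" using assms(1) m_comm unfolding Units_def by auto
    then show False using assms by blast
  qed
  from krull[OF cgenideal_ideal[OF assms(1)] this] cgenideal_self[OF assms(1)]
  show ?thesis by blast
qed

lemma (in ring) ideal_restrict:
  assumes "ideal I R" "subring S R"
  shows "ideal (I \<inter> S) (R\<lparr>carrier := S\<rparr>)"
proof -
  have "ring_hom_ring (R\<lparr>carrier := S\<rparr>) R id"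
  proof (rule ring_hom_ringI2)
    show "ring (R\<lparr>carrier := S\<rparr>)" by (rule subring_is_ring[OF assms(2)])
    show "ring R" by (rule ring_axioms)
    show "id \<in> ring_hom (R\<lparr>carrier := S\<rparr>) R"
      by (rule ring_hom_memI) (use subringE(1)[OF assms(2)] in auto)
  qed
  from ring_hom_ring.ideal_vimage[OF this assms(1)]
  have "ideal {r \<in> S. r \<in> I} (R\<lparr>carrier := S\<rparr>)" by simp
  moreover have "{r \<in> S. r \<in> I} = I \<inter> S" by blast
  ultimately show ?thesis by simp
qed




fun rT :: "('a,'b) ring_scheme \<Rightarrow> 'a list \<Rightarrow> 'a \<Rightarrow> 'a" where
  "rT R [] x = \<zero>\<^bsub>R\<^esub>"
| "rT R (c#p) x = c \<oplus>\<^bsub>R\<^esub> x \<otimes>\<^bsub>R\<^esub> rT R p x"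

lemma (in ring) rT_closed: "set p \<subseteq> carrier R \<Longrightarrow> x \<in> carrier R \<Longrightarrow> rT R p x \<in> carrier R"
  by (induct p) auto

lemma (in ring) rT_sub: "subring S R \<Longrightarrow> set p \<subseteq> S \<Longrightarrow> x \<in> S \<Longrightarrow> rT R p x \<in> S"
  by (induct p) (auto simp: subringE)

lemma (in cring) rT_eval:
  assumes "x \<in> carrier R" "y \<in> carrier R" "x \<otimes> y = \<one>"
  shows "set p \<subseteq> carrier R \<Longrightarrow> x [^] length p \<otimes> eval p y = x \<otimes> rT R p x"
proof (induct p)
  case Nil then show ?case using assms by simp
next
  case (Cons c p)
  let ?L = "length p"
  have c: "c \<in> carrier R" and p: "set p \<subseteq> carrier R" using Cons by auto
  have E: "eval p y \<in> carrier R" using eval_in_carrier[OF p assms(2)] .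
  have T: "rT R p x \<in> carrier R" using rT_closed[OF p assms(1)] .
  have xyL: "x [^] ?L \<otimes> y [^] ?L = \<one>"
    using nat_pow_distrib[OF assms(1,2), of ?L] assms(3) by simp
  have "x [^] length (c#p) \<otimes> eval (c#p) y = (x [^] ?L \<otimes> x) \<otimes> (c \<otimes> y [^] ?L \<oplus> eval p y)"
    by simp
  also have "\<dots> = x \<otimes> c \<otimes> (x [^] ?L \<otimes> y [^] ?L) \<oplus> x \<otimes> (x [^] ?L \<otimes> eval p y)"
    using c E assms by (simp add: r_distr m_ac)
  also have "\<dots> = x \<otimes> (c \<oplus> x \<otimes> rT R p x)"
    using xyL Cons(1)[OF p] c T assms by (simp add: r_distr)
  finally show ?case by simp
qed

lemma (in ring_hom_ring) rT_hom:
  "set p \<subseteq> carrier R \<Longrightarrow> x \<in> carrier R \<Longrightarrow> h (rT R p x) = rT S (map h p) (h x)"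
  by (induct p) (auto simp: R.rT_closed)




lemma (in cring) inv_mod_max:
  assumes S: "subring S R" and int: "\<forall>b\<in>carrier R. integral_over R S b"
    and N: "maximalideal N R" and a: "a \<in> S" "a \<notin> N"
  shows "\<exists>a'\<in>S. a \<otimes> a' \<ominus> \<one> \<in> N"
proof -
  interpret N: maximalideal N R by fact
  define K where "K = R Quot N"
  interpret K: field K unfolding K_def by (rule N.quotient_is_field[OF is_cring])
  interpret H: ring_hom_ring R K "(+>) N" unfolding K_def by (rule N.rcos_ring_hom_ring)
  have Ssub: "S \<subseteq> carrier R" using subringE(1)[OF S] .
  have ac: "a \<in> carrier R" using a Ssub by auto
  have zK: "\<zero>\<^bsub>K\<^esub> = N" unfolding K_def FactRing_def by simp
  have hnz: "N +> a \<noteq> \<zero>\<^bsub>K\<^esub>" using N.rcos_const_imp_mem[OF ac] a zK by auto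
  have hac: "N +> a \<in> carrier K" using H.hom_closed[OF ac] .
  then have "N +> a \<in> Units K" using hnz K.field_Units by blast
  then obtain Y where Y: "Y \<in> carrier K" "(N +> a) \<otimes>\<^bsub>K\<^esub> Y = \<one>\<^bsub>K\<^esub>"
    unfolding Units_def by auto
  obtain b where b: "b \<in> carrier R" "Y = N +> b"
    using Y(1) unfolding K_def FactRing_def A_RCOSETS_defs a_r_coset_def[symmetric] by auto
  obtain p where p: "p \<noteq> []" "set p \<subseteq> S" "hd p = \<one>" "eval p b = \<zero>"
    using int b(1) unfolding integral_over_def by blast
  then obtain q where pq: "p = \<one> # q" by (cases p) auto
  have pc: "set p \<subseteq> carrier R" "set q \<subseteq> carrier R" "set q \<subseteq> S" using p(2) Ssub pq by auto
  have "N +> eval p b = K.eval (map ((+>) N) p) (N +> b)"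
    using H.eval_hom'[OF b(1) pc(1)] .
  then have ev0: "K.eval (map ((+>) N) p) (N +> b) = \<zero>\<^bsub>K\<^esub>" using p(4) by simp
  have mc: "set (map ((+>) N) p) \<subseteq> carrier K" using pc(1) H.hom_closed by auto
  have hbc: "N +> b \<in> carrier K" using H.hom_closed[OF b(1)] .
  have "(N +> a) [^]\<^bsub>K\<^esub> length (map ((+>) N) p) \<otimes>\<^bsub>K\<^esub> K.eval (map ((+>) N) p) (N +> b)
      = (N +> a) \<otimes>\<^bsub>K\<^esub> rT K (map ((+>) N) p) (N +> a)"
    using K.rT_eval[OF hac hbc _ mc] Y b by simp
  then have "(N +> a) \<otimes>\<^bsub>K\<^esub> rT K (map ((+>) N) p) (N +> a) = \<zero>\<^bsub>K\<^esub>"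
    using ev0 hac by simp
  moreover have "rT K (map ((+>) N) p) (N +> a) \<in> carrier K"
    using K.rT_closed[OF mc hac] .
  ultimately have "rT K (map ((+>) N) p) (N +> a) = \<zero>\<^bsub>K\<^esub>"
    using K.integral_iff hac hnz by blast
  then have "N +> rT R p a = N" using H.rT_hom[OF pc(1) ac] zK by simp
  then have tN: "rT R p a \<in> N" using N.rcos_const_imp_mem rT_closed[OF pc(1) ac] by blast
  define a' where "a' = \<ominus> rT R q a"
  have tq: "rT R q a \<in> S" using rT_sub[OF S pc(3) a(1)] .
  have a'S: "a' \<in> S" unfolding a'_def using subringE(5)[OF S tq] .
  have tqc: "rT R q a \<in> carrier R" using tq Ssub by auto
  have "a \<otimes> a' \<ominus> \<one> = \<ominus> rT R p a"
    unfolding a'_def pq using ac tqc by (simp add: a_minus_def) algebra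
  then have "a \<otimes> a' \<ominus> \<one> \<in> N" using tN by simp
  then show ?thesis using a'S by blast
qed




lemma set_add_mem: "x \<in> S <+>\<^bsub>R\<^esub> I \<longleftrightarrow> (\<exists>s\<in>S. \<exists>i\<in>I. x = s \<oplus>\<^bsub>R\<^esub> i)"
  by (auto simp: set_add_def')

lemma rcos_mem: "x \<in> I +>\<^bsub>R\<^esub> a \<longleftrightarrow> (\<exists>i\<in>I. x = i \<oplus>\<^bsub>R\<^esub> a)"
  by (auto simp: a_r_coset_def')

lemma rcos_consistent [simp]: "a_r_coset (R\<lparr>carrier := S\<rparr>) = a_r_coset R"
  by (simp add: a_r_coset_def' fun_eq_iff)

lemma set_add_consistent [simp]: "set_add (R\<lparr>carrier := S\<rparr>) = set_add R"
  by (simp add: set_add_def' fun_eq_iff)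

lemma quot_carrier: "carrier (R\<lparr>carrier := S\<rparr> Quot I) = (\<lambda>s. I +>\<^bsub>R\<^esub> s) ` S"
  by (auto simp: FactRing_def A_RCOSETS_def')

lemma quot_zero: "\<zero>\<^bsub>R Quot I\<^esub> = I"
  by (simp add: FactRing_def)

lemma quot_one: "\<one>\<^bsub>R\<lparr>carrier := S\<rparr> Quot I\<^esub> = I +>\<^bsub>R\<^esub> \<one>\<^bsub>R\<^esub>"
  by (simp add: FactRing_def)

lemma quot_add: "x \<oplus>\<^bsub>R Quot I\<^esub> y = x <+>\<^bsub>R\<^esub> y"
  by (simp add: FactRing_def)

lemma (in ring) sub_a_inv:
  assumes "subring S R" "x \<in> S"
  shows "\<ominus>\<^bsub>R\<lparr>carrier := S\<rparr>\<^esub> x = \<ominus> x"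
proof -
  interpret Sr: ring "R\<lparr>carrier := S\<rparr>" by (rule subring_is_ring[OF assms(1)])
  have xS: "x \<in> carrier (R\<lparr>carrier := S\<rparr>)" using assms(2) by simp
  have c: "\<ominus>\<^bsub>R\<lparr>carrier := S\<rparr>\<^esub> x \<in> S" using Sr.a_inv_closed[OF xS] by simp
  have "x \<oplus> \<ominus>\<^bsub>R\<lparr>carrier := S\<rparr>\<^esub> x = \<zero>" using Sr.r_neg[OF xS] by simp
  moreover have "x \<in> carrier R" "\<ominus>\<^bsub>R\<lparr>carrier := S\<rparr>\<^esub> x \<in> carrier R"
    using assms c subringE(1)[OF assms(1)] by auto
  ultimately show ?thesis
    by (metis add.inv_closed add.m_comm l_neg r_zero add.m_assoc)
qed

lemma (in ring) sub_a_minus: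
  assumes "subring S R" "x \<in> S" "y \<in> S"
  shows "x \<ominus>\<^bsub>R\<lparr>carrier := S\<rparr>\<^esub> y = x \<ominus> y"
  using sub_a_inv[OF assms(1,3)] by (simp add: a_minus_def)

lemma (in ring) sub_rcos_eq:
  assumes "subring S R" "ideal I (R\<lparr>carrier := S\<rparr>)" "x \<in> S" "y \<in> S"
  shows "I +> x = I +> y \<longleftrightarrow> x \<ominus> y \<in> I"
proof -
  interpret Sr: ring "R\<lparr>carrier := S\<rparr>" by (rule subring_is_ring[OF assms(1)])
  show ?thesis
    using Sr.quotient_eq_iff_same_a_r_cos[OF assms(2), of x y] assms sub_a_minus[OF assms(1,3,4)] by simp
qed

lemma (in ring) sub_rcos_mult:
  assumes "subring S R" "ideal I (R\<lparr>carrier := S\<rparr>)" "x \<in> S" "y \<in> S"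
  shows "(I +> x) \<otimes>\<^bsub>R\<lparr>carrier := S\<rparr> Quot I\<^esub> (I +> y) = I +> (x \<otimes> y)"
proof -
  have "[mod I:] (I +>\<^bsub>R\<lparr>carrier := S\<rparr>\<^esub> x) \<Otimes>\<^bsub>R\<lparr>carrier := S\<rparr>\<^esub> (I +>\<^bsub>R\<lparr>carrier := S\<rparr>\<^esub> y)
     = I +>\<^bsub>R\<lparr>carrier := S\<rparr>\<^esub> (x \<otimes>\<^bsub>R\<lparr>carrier := S\<rparr>\<^esub> y)"
    using ideal.rcoset_mult_add[OF assms(2)] assms by simp
  then show ?thesis by (simp add: FactRing_def)
qed

lemma (in ring) sub_rcos_add:
  assumes "subring S R" "ideal I (R\<lparr>carrier := S\<rparr>)" "x \<in> S" "y \<in> S"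
  shows "(I +> x) \<oplus>\<^bsub>R\<lparr>carrier := S\<rparr> Quot I\<^esub> (I +> y) = I +> (x \<oplus> y)"
proof -
  have "(I +>\<^bsub>R\<lparr>carrier := S\<rparr>\<^esub> x) <+>\<^bsub>R\<lparr>carrier := S\<rparr>\<^esub> (I +>\<^bsub>R\<lparr>carrier := S\<rparr>\<^esub> y)
     = I +>\<^bsub>R\<lparr>carrier := S\<rparr>\<^esub> (x \<oplus>\<^bsub>R\<lparr>carrier := S\<rparr>\<^esub> y)"
    using ideal.a_rcos_sum[OF assms(2)] assms by simp
  then show ?thesis by (simp add: FactRing_def)
qed

lemma (in ring) res_map_rcos:
  assumes "ideal I R" "J \<subseteq> I" "\<zero> \<in> J" "a \<in> carrier R"
  shows "I <+> (J +> a) = I +> a"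
proof -
  interpret ideal I R by fact
  show ?thesis
  proof (rule Set.set_eqI)
    fix x
    show "x \<in> I <+> (J +> a) \<longleftrightarrow> x \<in> I +> a"
    proof
      assume "x \<in> I <+> (J +> a)"
      then obtain i j where ij: "i \<in> I" "j \<in> J" "x = i \<oplus> (j \<oplus> a)"
        by (auto simp: set_add_mem rcos_mem)
      then have "x = (i \<oplus> j) \<oplus> a" "i \<oplus> j \<in> I"
        using assms Icarr a_assoc by auto
      then show "x \<in> I +> a" by (auto simp: rcos_mem)
    next
      assume "x \<in> I +> a"
      then obtain i where i: "i \<in> I" "x = i \<oplus> a" by (auto simp: rcos_mem)
      then have "x = i \<oplus> (\<zero> \<oplus> a)" using assms Icarr by simp
      moreover have "\<zero> \<oplus> a \<in> J +> a" using assms(3) by (auto simp: rcos_mem)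
      ultimately show "x \<in> I <+> (J +> a)" using i unfolding set_add_mem by blast
    qed
  qed
qed

lemma (in ring) sub_plus_ideal:
  assumes "subring S R" "ideal I R"
  shows "subring (S <+> I) R"
proof -
  interpret I: ideal I R by fact
  note SE = subringE[OF assms(1)]
  show ?thesis
  proof (rule subringI)
    show "S <+> I \<subseteq> carrier R" using SE(1) I.Icarr by (auto simp: set_add_mem intro!: add.m_closed)
    show "\<one> \<in> S <+> I" unfolding set_add_mem
      using SE(3) I.zero_closed by (intro bexI[of _ \<one>] bexI[of _ \<zero>]) auto
  next
    fix h assume "h \<in> S <+> I"
    then obtain s i where si: "s \<in> S" "i \<in> I" "h = s \<oplus> i" by (auto simp: set_add_mem)
    have c: "s \<in> carrier R" "i \<in> carrier R" using si SE(1) I.Icarr by auto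
    have "\<ominus> h = \<ominus> s \<oplus> \<ominus> i" using si c by (simp add: minus_add)
    then show "\<ominus> h \<in> S <+> I" unfolding set_add_mem using SE(5) si I.a_inv_closed by blast
  next
    fix h1 h2 assume "h1 \<in> S <+> I" "h2 \<in> S <+> I"
    then obtain s i s' i' where si: "s \<in> S" "i \<in> I" "h1 = s \<oplus> i" "s' \<in> S" "i' \<in> I" "h2 = s' \<oplus> i'"
      by (auto simp: set_add_mem)
    have c: "s \<in> carrier R" "i \<in> carrier R" "s' \<in> carrier R" "i' \<in> carrier R"
      using si SE(1) I.Icarr by auto
    have "h1 \<otimes> h2 = s \<otimes> s' \<oplus> (s \<otimes> i' \<oplus> i \<otimes> s' \<oplus> i \<otimes> i')"
      using si c by (simp add: l_distr r_distr a_ac)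
    moreover have "s \<otimes> i' \<oplus> i \<otimes> s' \<oplus> i \<otimes> i' \<in> I"
      using si c I.I_l_closed I.I_r_closed by simp
    ultimately show "h1 \<otimes> h2 \<in> S <+> I" unfolding set_add_mem using SE(6) si by blast
    have "h1 \<oplus> h2 = (s \<oplus> s') \<oplus> (i \<oplus> i')" using si c by (simp add: a_ac)
    then show "h1 \<oplus> h2 \<in> S <+> I" unfolding set_add_mem using SE(7) si I.a_closed by blast
  qed
qed




lemma (in cring) contract_max:
  assumes S: "subring S R" and int: "\<forall>b\<in>carrier R. integral_over R S b"
    and N: "maximalideal N R"
  shows "maximalideal (N \<inter> S) (R\<lparr>carrier := S\<rparr>)"
proof -
  interpret N: maximalideal N R by fact
  note SE = subringE[OF S]
  have one: "\<one> \<notin> N" using N.one_imp_carrier N.I_notcarr by blast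
  show ?thesis
  proof (rule maximalidealI)
    show "ideal (N \<inter> S) (R\<lparr>carrier := S\<rparr>)" by (rule ideal_restrict[OF N.is_ideal S])
    show "carrier (R\<lparr>carrier := S\<rparr>) \<noteq> N \<inter> S" using one SE(3) by auto
  next
    fix J assume J: "ideal J (R\<lparr>carrier := S\<rparr>)" "N \<inter> S \<subseteq> J" "J \<subseteq> carrier (R\<lparr>carrier := S\<rparr>)"
    show "J = N \<inter> S \<or> J = carrier (R\<lparr>carrier := S\<rparr>)"
    proof (cases "J \<subseteq> N")
      case True then show ?thesis using J by auto
    next
      case False
      then obtain a where a: "a \<in> J" "a \<notin> N" by blast
      have aS: "a \<in> S" using a J(3) by auto
      obtain a' where a': "a' \<in> S" "a \<otimes> a' \<ominus> \<one> \<in> N" using inv_mod_max[OF S int N aS a(2)] by blast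
      have ac: "a \<in> carrier R" "a' \<in> carrier R" using aS a' SE(1) by auto
      have zS: "a \<otimes> a' \<ominus> \<one> \<in> S" unfolding a_minus_def using SE aS a' by simp
      have zJ: "a \<otimes> a' \<ominus> \<one> \<in> J" using zS a' J(2) by blast
      have wJ: "a \<otimes> (\<ominus> a') \<in> J" using ideal.I_r_closed[OF J(1) a(1), of "\<ominus> a'"] SE(5) a' by simp
      have "(a \<otimes> (\<ominus> a')) \<oplus> (a \<otimes> a' \<ominus> \<one>) \<in> J"
        using additive_subgroup.a_closed[OF ideal.axioms(1)[OF J(1)] wJ zJ] by simp
      moreover have "(a \<otimes> (\<ominus> a')) \<oplus> (a \<otimes> a' \<ominus> \<one>) = \<ominus> \<one>"
        using ac by (simp add: a_minus_def) algebra
      ultimately have m1: "\<ominus> \<one> \<in> J" by simp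
      have "(\<ominus> \<one>) \<otimes> (\<ominus> \<one>) \<in> J" using ideal.I_l_closed[OF J(1) m1, of "\<ominus> \<one>"] SE by simp
      moreover have "(\<ominus> \<one>) \<otimes> (\<ominus> \<one>) = \<one>" by algebra
      ultimately have "\<one> \<in> J" by simp
      then have "J = carrier (R\<lparr>carrier := S\<rparr>)" using ideal.one_imp_carrier[OF J(1)] by simp
      then show ?thesis by blast
    qed
  qed
qed

locale setting = cring R for R (structure) +
  fixes A m
  assumes int_ext: "integral_extension R A"
    and loc: "local_ring_with (R\<lparr>carrier := A\<rparr>) m"
begin

definition Rad where "Rad = jacobson_radical R"

lemma A_sub: "subring A R" using int_ext unfolding integral_extension_def by blast
lemma A_int: "\<forall>b\<in>carrier R. integral_over R A b" using int_ext unfolding integral_extension_def by blast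
lemma m_max: "maximalideal m (R\<lparr>carrier := A\<rparr>)" using loc unfolding local_ring_with_def by blast
lemma m_uniq: "maximalideal n (R\<lparr>carrier := A\<rparr>) \<Longrightarrow> n = m" using loc unfolding local_ring_with_def by blast
lemma A_cring: "cring (R\<lparr>carrier := A\<rparr>)" using loc unfolding local_ring_with_def by blast
lemma m_sub: "m \<subseteq> A"
  using additive_subgroup.a_subset[OF ideal.axioms(1)[OF maximalideal.axioms(1)[OF m_max]]] by simp
lemma one_not_m: "\<one> \<notin> m"
  using ideal.one_imp_carrier[OF maximalideal.axioms(1)[OF m_max]] maximalideal.I_notcarr[OF m_max] by auto
lemma zero_m: "\<zero> \<in> m"
  using additive_subgroup.zero_closed[OF ideal.axioms(1)[OF maximalideal.axioms(1)[OF m_max]]] by simp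

lemma ex_max: "\<exists>M. maximalideal M R"
proof -
  have "\<one> \<noteq> \<zero>" using one_not_m zero_m by auto
  then have "\<one> \<notin> {\<zero>}" by simp
  from krull[OF zeroideal this] show ?thesis by blast
qed

lemma contr: "maximalideal N R \<Longrightarrow> N \<inter> A = m"
  using contract_max[OF A_sub A_int] m_uniq by blast

lemma m_in_N: "maximalideal N R \<Longrightarrow> m \<subseteq> N" using contr by blast

lemma max_sub: "maximalideal N R \<Longrightarrow> N \<subseteq> carrier R"
  using additive_subgroup.a_subset[OF ideal.axioms(1)[OF maximalideal.axioms(1)]] by blast

lemma Rad_eq: "Rad = \<Inter>{N. maximalideal N R}"
  unfolding Rad_def jacobson_radical_def using ex_max max_sub by blast

lemma Rad_mem: "x \<in> Rad \<longleftrightarrow> x \<in> carrier R \<and> (\<forall>N. maximalideal N R \<longrightarrow> x \<in> N)"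
  unfolding Rad_def jacobson_radical_def by blast

lemma Rad_ideal: "ideal Rad R"
  unfolding Rad_eq using ex_max by (intro i_Intersect) (auto dest: maximalideal.axioms(1))

lemma Rad_carr: "Rad \<subseteq> carrier R" using Rad_mem by blast

lemma m_Rad: "m \<subseteq> Rad" using Rad_mem m_in_N m_sub subringE(1)[OF A_sub] by blast

lemma A_Rad: "A \<inter> Rad = m"
proof -
  obtain M where "maximalideal M R" using ex_max by blast
  then have "A \<inter> Rad \<subseteq> m" using contr[of M] Rad_mem by blast
  then show ?thesis using m_Rad m_sub by blast
qed

lemma one_Rad: "\<one> \<notin> Rad" using A_Rad one_not_m subringE(3)[OF A_sub] by blast

lemma unit_one_plus:
  assumes "s \<in> Rad" shows "\<exists>u\<in>carrier R. (\<one> \<oplus> s) \<otimes> u = \<one>"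
proof -
  have sc: "s \<in> carrier R" using assms Rad_carr by blast
  have "\<one> \<oplus> s \<in> Units R"
  proof (rule ccontr)
    assume "\<one> \<oplus> s \<notin> Units R"
    then obtain N where N: "maximalideal N R" "\<one> \<oplus> s \<in> N" using nonunit_in_max sc by blast
    interpret N: maximalideal N R by fact
    have "s \<in> N" using assms N Rad_mem by blast
    then have "(\<one> \<oplus> s) \<ominus> s \<in> N" using N(2) by (simp add: a_minus_def N.a_closed N.a_inv_closed)
    moreover have "(\<one> \<oplus> s) \<ominus> s = \<one>" using sc by algebra
    ultimately have "\<one> \<in> N" by simp
    then show False using N.one_imp_carrier N.I_notcarr by blast
  qed
  then show ?thesis unfolding Units_def using m_comm by auto
qed

lemma A_unit:
  assumes "a \<in> A" "a \<notin> m" shows "\<exists>a'\<in>A. a \<otimes> a' = \<one>"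
proof -
  interpret AC: cring "R\<lparr>carrier := A\<rparr>" by (rule A_cring)
  have "a \<in> Units (R\<lparr>carrier := A\<rparr>)"
  proof (rule ccontr)
    assume "a \<notin> Units (R\<lparr>carrier := A\<rparr>)"
    then obtain M where "maximalideal M (R\<lparr>carrier := A\<rparr>)" "a \<in> M"
      using AC.nonunit_in_max assms by auto
    then show False using m_uniq assms by blast
  qed
  then show ?thesis unfolding Units_def by auto
qed

end



lemma (in ring) ideal_unit_full:
  assumes "subring T R" "ideal J (R\<lparr>carrier := T\<rparr>)" "x \<in> J" "y \<in> T" "x \<otimes> y = \<one>"
  shows "J = T"
proof -
  have "x \<otimes> y \<in> J" using ideal.I_r_closed[OF assms(2,3), of y] assms(4) by simp
  then have "\<one> \<in> J" using assms(5) by simp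
  then show ?thesis using ideal.one_imp_carrier[OF assms(2)] by simp
qed

context setting begin

abbreviation "A' \<equiv> A <+> Rad"

lemma A'_sub: "subring A' R" by (rule sub_plus_ideal[OF A_sub Rad_ideal])

lemma A'_mem: "x \<in> A' \<longleftrightarrow> (\<exists>a\<in>A. \<exists>r\<in>Rad. x = a \<oplus> r)" by (rule set_add_mem)

lemma A_A': "A \<subseteq> A'"
proof
  fix a assume "a \<in> A"
  moreover have "a = a \<oplus> \<zero>" using \<open>a \<in> A\<close> subringE(1)[OF A_sub] by auto
  ultimately show "a \<in> A'" unfolding A'_mem using additive_subgroup.zero_closed[OF ideal.axioms(1)[OF Rad_ideal]] by blast
qed

lemma Rad_A': "Rad \<subseteq> A'"
proof
  fix r assume "r \<in> Rad"
  moreover have "r = \<zero> \<oplus> r" using \<open>r \<in> Rad\<close> Rad_carr by auto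
  ultimately show "r \<in> A'" unfolding A'_mem using subringE(2)[OF A_sub] by blast
qed

lemma A'_unit:
  assumes "x \<in> A'" "x \<notin> Rad" shows "\<exists>y\<in>A'. x \<otimes> y = \<one>"
proof -
  interpret Rd: ideal Rad R by (rule Rad_ideal)
  obtain a r where ar: "a \<in> A" "r \<in> Rad" "x = a \<oplus> r" using assms(1) A'_mem by blast
  have ac: "a \<in> carrier R" "r \<in> carrier R" using ar subringE(1)[OF A_sub] Rad_carr by auto
  have "a \<notin> m"
  proof
    assume "a \<in> m" then have "a \<in> Rad" using m_Rad by blast
    then have "x \<in> Rad" using ar by simp
    then show False using assms by blast
  qed
  then obtain a' where a': "a' \<in> A" "a \<otimes> a' = \<one>" using A_unit ar by blast
  have a'c: "a' \<in> carrier R" using a' subringE(1)[OF A_sub] by auto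
  define s where "s = r \<otimes> a'"
  have sR: "s \<in> Rad" unfolding s_def using Rd.I_r_closed ar a'c by simp
  have sc: "s \<in> carrier R" using sR Rad_carr by blast
  have xa': "x \<otimes> a' = \<one> \<oplus> s" unfolding s_def ar using ac a'c a'(2) by (simp add: l_distr)
  obtain u where u: "u \<in> carrier R" "(\<one> \<oplus> s) \<otimes> u = \<one>" using unit_one_plus[OF sR] by blast
  have "u = \<one> \<oplus> \<ominus> (s \<otimes> u)"
  proof -
    have "u \<oplus> s \<otimes> u = \<one>" using u sc by (simp add: l_distr)
    then have "u \<oplus> s \<otimes> u \<oplus> \<ominus> (s \<otimes> u) = \<one> \<oplus> \<ominus> (s \<otimes> u)" by simp
    then show ?thesis using u sc by (simp add: a_assoc r_neg)
  qed
  moreover have "\<ominus> (s \<otimes> u) \<in> Rad" using Rd.I_r_closed[OF sR u(1)] by simp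
  ultimately have uA': "u \<in> A'" unfolding A'_mem using subringE(3)[OF A_sub] by blast
  have "a' \<otimes> u \<in> A'" using subringE(6)[OF A'_sub] A_A' a'(1) uA' by blast
  moreover have "x \<otimes> (a' \<otimes> u) = \<one>"
  proof -
    have xc: "x \<in> carrier R" using ar ac by simp
    have "x \<otimes> (a' \<otimes> u) = (x \<otimes> a') \<otimes> u" using xc a'c u by (simp add: m_assoc)
    then show ?thesis using xa' u by simp
  qed
  ultimately show ?thesis by blast
qed

lemma Rad_ideal': "ideal Rad (R\<lparr>carrier := A'\<rparr>)"
proof -
  have "Rad \<inter> A' = Rad" using Rad_A' by blast
  then show ?thesis using ideal_restrict[OF Rad_ideal A'_sub] by simp
qed

lemma part1a: "local_ring_with (R\<lparr>carrier := A'\<rparr>) Rad"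
proof -
  have cr: "cring (R\<lparr>carrier := A'\<rparr>)"
    using subcring_iff[OF subringE(1)[OF A'_sub]] subcringI'[OF A'_sub] by blast
  have one: "\<one> \<in> A'" using subringE(3)[OF A'_sub] .
  have mx: "maximalideal Rad (R\<lparr>carrier := A'\<rparr>)"
  proof (rule maximalidealI)
    show "ideal Rad (R\<lparr>carrier := A'\<rparr>)" by (rule Rad_ideal')
    show "carrier (R\<lparr>carrier := A'\<rparr>) \<noteq> Rad" using one one_Rad by auto
  next
    fix J assume J: "ideal J (R\<lparr>carrier := A'\<rparr>)" "Rad \<subseteq> J" "J \<subseteq> carrier (R\<lparr>carrier := A'\<rparr>)"
    show "J = Rad \<or> J = carrier (R\<lparr>carrier := A'\<rparr>)"
    proof (cases "J \<subseteq> Rad")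
      case True then show ?thesis using J by blast
    next
      case False
      then obtain x where x: "x \<in> J" "x \<notin> Rad" by blast
      then have "x \<in> A'" using J(3) by auto
      then obtain y where "y \<in> A'" "x \<otimes> y = \<one>" using A'_unit x by blast
      then show ?thesis using ideal_unit_full[OF A'_sub J(1) x(1)] by simp
    qed
  qed
  have "M = Rad" if M: "maximalideal M (R\<lparr>carrier := A'\<rparr>)" for M
  proof -
    interpret M: maximalideal M "R\<lparr>carrier := A'\<rparr>" by (rule M)
    have MA': "M \<subseteq> A'" using M.a_subset by simp
    have "M \<subseteq> Rad"
    proof
      fix x assume x: "x \<in> M"
      show "x \<in> Rad"
      proof (rule ccontr)
        assume "x \<notin> Rad"
        then obtain y where "y \<in> A'" "x \<otimes> y = \<one>" using A'_unit x MA' by blast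
        then have "M = A'" using ideal_unit_full[OF A'_sub M.is_ideal x] by simp
        then show False using M.I_notcarr by simp
      qed
    qed
    then have "Rad = M \<or> Rad = carrier (R\<lparr>carrier := A'\<rparr>)"
      using M.I_maximal[OF Rad_ideal'] Rad_A' by simp
    then show ?thesis using one one_Rad by auto
  qed
  then show ?thesis unfolding local_ring_with_def using cr mx by blast
qed

end



context setting begin

lemma m_ideal: "ideal m (R\<lparr>carrier := A\<rparr>)" using maximalideal.axioms(1)[OF m_max] .

lemma rm:
  assumes "ideal N R" "m \<subseteq> N" "a \<in> A"
  shows "res_map R N (m +> a) = N +> a"
  unfolding res_map_def using res_map_rcos[OF assms(1,2) zero_m] assms(3) subringE(1)[OF A_sub] by auto

lemma ac: "a \<in> A \<Longrightarrow> a \<in> carrier R" using subringE(1)[OF A_sub] by auto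

lemma part1b: "res_map R Rad \<in> ring_iso (R\<lparr>carrier := A\<rparr> Quot m) (R\<lparr>carrier := A'\<rparr> Quot Rad)"
proof -
  let ?h = "res_map R Rad"
  have cQA: "carrier (R\<lparr>carrier := A\<rparr> Quot m) = (\<lambda>a. m +> a) ` A" by (rule quot_carrier)
  have cQA': "carrier (R\<lparr>carrier := A'\<rparr> Quot Rad) = (\<lambda>a. Rad +> a) ` A'" by (rule quot_carrier)
  have hr: "?h (m +> a) = Rad +> a" if "a \<in> A" for a using rm[OF Rad_ideal m_Rad that] .
  have hom: "?h \<in> ring_hom (R\<lparr>carrier := A\<rparr> Quot m) (R\<lparr>carrier := A'\<rparr> Quot Rad)"
  proof (rule ring_hom_memI)
    fix U assume "U \<in> carrier (R\<lparr>carrier := A\<rparr> Quot m)"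
    then obtain a where "a \<in> A" "U = m +> a" using cQA by auto
    then show "?h U \<in> carrier (R\<lparr>carrier := A'\<rparr> Quot Rad)" using hr cQA' A_A' by auto
  next
    fix U W assume "U \<in> carrier (R\<lparr>carrier := A\<rparr> Quot m)" "W \<in> carrier (R\<lparr>carrier := A\<rparr> Quot m)"
    then obtain a b where ab: "a \<in> A" "U = m +> a" "b \<in> A" "W = m +> b" using cQA by auto
    have ab': "a \<in> A'" "b \<in> A'" using ab A_A' by auto
    have abA: "a \<otimes> b \<in> A" "a \<oplus> b \<in> A" using ab subringE(6,7)[OF A_sub] by auto
    show "?h (U \<otimes>\<^bsub>R\<lparr>carrier := A\<rparr> Quot m\<^esub> W) = ?h U \<otimes>\<^bsub>R\<lparr>carrier := A'\<rparr> Quot Rad\<^esub> ?h W"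
      using sub_rcos_mult[OF A_sub m_ideal ab(1,3)] sub_rcos_mult[OF A'_sub Rad_ideal' ab']
        hr ab abA by simp
    show "?h (U \<oplus>\<^bsub>R\<lparr>carrier := A\<rparr> Quot m\<^esub> W) = ?h U \<oplus>\<^bsub>R\<lparr>carrier := A'\<rparr> Quot Rad\<^esub> ?h W"
      using sub_rcos_add[OF A_sub m_ideal ab(1,3)] sub_rcos_add[OF A'_sub Rad_ideal' ab']
        hr ab abA by simp
  next
    show "?h \<one>\<^bsub>R\<lparr>carrier := A\<rparr> Quot m\<^esub> = \<one>\<^bsub>R\<lparr>carrier := A'\<rparr> Quot Rad\<^esub>"
      using hr[OF subringE(3)[OF A_sub]] by (simp add: quot_one)
  qed
  have inj: "inj_on ?h (carrier (R\<lparr>carrier := A\<rparr> Quot m))"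
  proof (rule inj_onI)
    fix U W assume "U \<in> carrier (R\<lparr>carrier := A\<rparr> Quot m)" "W \<in> carrier (R\<lparr>carrier := A\<rparr> Quot m)"
      and eq: "?h U = ?h W"
    then obtain a b where ab: "a \<in> A" "U = m +> a" "b \<in> A" "W = m +> b" using cQA by auto
    have ab': "a \<in> A'" "b \<in> A'" using ab A_A' by auto
    have "Rad +> a = Rad +> b" using eq hr ab by simp
    then have "a \<ominus> b \<in> Rad" using sub_rcos_eq[OF A'_sub Rad_ideal' ab'] by simp
    moreover have "a \<ominus> b \<in> A" unfolding a_minus_def using ab subringE(5,7)[OF A_sub] by auto
    ultimately have "a \<ominus> b \<in> m" using A_Rad by blast
    then show "U = W" using sub_rcos_eq[OF A_sub m_ideal ab(1,3)] ab by simp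
  qed
  have surj: "?h ` carrier (R\<lparr>carrier := A\<rparr> Quot m) = carrier (R\<lparr>carrier := A'\<rparr> Quot Rad)"
  proof
    show "?h ` carrier (R\<lparr>carrier := A\<rparr> Quot m) \<subseteq> carrier (R\<lparr>carrier := A'\<rparr> Quot Rad)"
      using ring_hom_closed[OF hom] by blast
  next
    show "carrier (R\<lparr>carrier := A'\<rparr> Quot Rad) \<subseteq> ?h ` carrier (R\<lparr>carrier := A\<rparr> Quot m)"
    proof
      fix Z assume "Z \<in> carrier (R\<lparr>carrier := A'\<rparr> Quot Rad)"
      then obtain x where x: "x \<in> A'" "Z = Rad +> x" using cQA' by auto
      then obtain a r where ar: "a \<in> A" "r \<in> Rad" "x = a \<oplus> r" using A'_mem by blast
      have c: "a \<in> carrier R" "r \<in> carrier R" using ar ac Rad_carr by auto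
      have "x \<ominus> a = r" using c ar(3) by (simp add: a_minus_def) algebra
      moreover have "a \<in> A'" using A_A' ar by auto
      ultimately have "Rad +> x = Rad +> a" using sub_rcos_eq[OF A'_sub Rad_ideal' x(1), of a] ar by simp
      then have "Z = ?h (m +> a)" using x hr ar by simp
      moreover have "m +> a \<in> carrier (R\<lparr>carrier := A\<rparr> Quot m)" using cQA ar by auto
      ultimately show "Z \<in> ?h ` carrier (R\<lparr>carrier := A\<rparr> Quot m)" by blast
    qed
  qed
  show ?thesis unfolding ring_iso_def bij_betw_def using hom inj surj by blast
qed

end



lemma quot_E: "U \<in> carrier (R\<lparr>carrier := S\<rparr> Quot I) \<Longrightarrow> \<exists>s\<in>S. U = I +>\<^bsub>R\<^esub> s"
  unfolding quot_carrier by (erule imageE) blast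

lemma quot_I: "s \<in> S \<Longrightarrow> I +>\<^bsub>R\<^esub> s \<in> carrier (R\<lparr>carrier := S\<rparr> Quot I)"
  unfolding quot_carrier by (erule imageI)

context setting begin

lemma part2:
  assumes C: "subring C R" and AC: "A \<subseteq> C" and lc: "local_ring_with (R\<lparr>carrier := C\<rparr>) n"
    and iso: "res_map R n \<in> ring_iso (R\<lparr>carrier := A\<rparr> Quot m) (R\<lparr>carrier := C\<rparr> Quot n)"
  shows "C \<subseteq> A'"
proof -
  have intC: "\<forall>b\<in>carrier R. integral_over R C b"
  proof
    fix b assume "b \<in> carrier R"
    then obtain p where "p \<noteq> []" "set p \<subseteq> A" "hd p = \<one>" "eval p b = \<zero>"
      using A_int unfolding integral_over_def by blast
    then show "integral_over R C b" unfolding integral_over_def using AC by (intro exI[of _ p]) auto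
  qed
  have nmax: "maximalideal n (R\<lparr>carrier := C\<rparr>)" and nuniq: "\<And>k. maximalideal k (R\<lparr>carrier := C\<rparr>) \<Longrightarrow> k = n"
    using lc unfolding local_ring_with_def by blast+
  have nC: "n \<subseteq> C"
    using additive_subgroup.a_subset[OF ideal.axioms(1)[OF maximalideal.axioms(1)[OF nmax]]] by simp
  have Cc: "C \<subseteq> carrier R" using subringE(1)[OF C] .
  have nR: "n \<subseteq> Rad"
  proof -
    have nN: "n \<subseteq> N" if "maximalideal N R" for N
    proof -
      have "N \<inter> C = n" using nuniq[OF contract_max[OF C intC that]] .
      then show ?thesis by blast
    qed
    show ?thesis
    proof
      fix x assume x: "x \<in> n"
      then have "x \<in> carrier R" using nC Cc by blast
      moreover have "\<forall>N. maximalideal N R \<longrightarrow> x \<in> N" using nN x by blast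
      ultimately show "x \<in> Rad" unfolding Rad_mem by blast
    qed
  qed
  have z: "\<zero> \<in> n"
    using additive_subgroup.zero_closed[OF ideal.axioms(1)[OF maximalideal.axioms(1)[OF nmax]]] by simp
  show ?thesis
  proof
    fix c assume c: "c \<in> C"
    have "n +> c \<in> carrier (R\<lparr>carrier := C\<rparr> Quot n)" unfolding quot_carrier by (rule imageI[OF c])
    moreover have "bij_betw (res_map R n) (carrier (R\<lparr>carrier := A\<rparr> Quot m)) (carrier (R\<lparr>carrier := C\<rparr> Quot n))"
      using iso unfolding ring_iso_def by simp
    ultimately have "n +> c \<in> res_map R n ` carrier (R\<lparr>carrier := A\<rparr> Quot m)"
      using bij_betw_imp_surj_on by metis
    then obtain U where U: "U \<in> carrier (R\<lparr>carrier := A\<rparr> Quot m)" "res_map R n U = n +> c"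
      by (rule imageE) (rule that, auto)
    obtain a where a: "a \<in> A" "U = m +> a" using quot_E[OF U(1)] by blast
    have "c = \<zero> \<oplus> c" using c Cc by auto
    then have "c \<in> n +> c" unfolding rcos_mem using z by blast
    then have "c \<in> n <+> (m +> a)" using U a unfolding res_map_def by simp
    then obtain i k where ik: "i \<in> n" "k \<in> m +> a" "c = i \<oplus> k" unfolding set_add_mem by blast
    then obtain j where "j \<in> m" "k = j \<oplus> a" unfolding rcos_mem by blast
    then have ij: "i \<in> n" "j \<in> m" "c = i \<oplus> (j \<oplus> a)" using ik by auto
    have cc: "i \<in> carrier R" "j \<in> carrier R" "a \<in> carrier R" using ij nC Cc m_sub a ac by auto
    have "c = a \<oplus> (i \<oplus> j)" using ij(3) cc by (simp add: a_ac)
    moreover have "i \<oplus> j \<in> Rad"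
      using additive_subgroup.a_closed[OF ideal.axioms(1)[OF Rad_ideal]] ij(1,2) nR m_Rad by blast
    ultimately show "c \<in> A'" unfolding A'_mem using a by blast
  qed
qed

lemma max_ideal: "maximalideal N R \<Longrightarrow> ideal N R" by (rule maximalideal.axioms(1))

lemma inj_N:
  assumes N: "maximalideal N R"
  shows "inj_on (res_map R N) (carrier (R\<lparr>carrier := A\<rparr> Quot m))"
proof (rule inj_onI)
  fix U W assume "U \<in> carrier (R\<lparr>carrier := A\<rparr> Quot m)" "W \<in> carrier (R\<lparr>carrier := A\<rparr> Quot m)"
    and eq: "res_map R N U = res_map R N W"
  then obtain a b where ab: "a \<in> A" "U = m +> a" "b \<in> A" "W = m +> b" using quot_E by metis
  have "N +> a = N +> b" using eq rm[OF max_ideal[OF N] m_in_N[OF N]] ab by simp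
  then have "a \<ominus> b \<in> N" using quotient_eq_iff_same_a_r_cos[OF max_ideal[OF N]] ab ac by simp
  moreover have "a \<ominus> b \<in> A" unfolding a_minus_def using ab subringE(5,7)[OF A_sub] by auto
  ultimately have "a \<ominus> b \<in> m" using contr[OF N] by blast
  then show "U = W" using sub_rcos_eq[OF A_sub m_ideal ab(1,3)] ab by simp
qed

lemma inv_N:
  assumes N: "maximalideal N R" and a: "a \<in> A"
  shows "the_inv_into (carrier (R\<lparr>carrier := A\<rparr> Quot m)) (res_map R N) (N +> a) = m +> a"
proof (rule the_inv_into_f_eq[OF inj_N[OF N]])
  show "res_map R N (m +> a) = N +> a" using rm[OF max_ideal[OF N] m_in_N[OF N] a] .
  show "m +> a \<in> carrier (R\<lparr>carrier := A\<rparr> Quot m)" using quot_I[OF a] .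
qed

lemma part3:
  assumes b: "b \<in> carrier R"
  shows "b \<in> A' \<longleftrightarrow>
       ((\<forall>n. maximalideal n R \<longrightarrow>
            n +> b \<in> res_map R n ` carrier ((R\<lparr>carrier := A\<rparr>) Quot m))
        \<and> (\<forall>n1 n2. maximalideal n1 R \<longrightarrow> maximalideal n2 R \<longrightarrow>
            the_inv_into (carrier ((R\<lparr>carrier := A\<rparr>) Quot m)) (res_map R n1) (n1 +> b)
            = the_inv_into (carrier ((R\<lparr>carrier := A\<rparr>) Quot m)) (res_map R n2) (n2 +> b)))"
    (is "_ \<longleftrightarrow> ?P \<and> ?Q")
proof
  assume "b \<in> A'"
  then obtain a r where ar: "a \<in> A" "r \<in> Rad" "b = a \<oplus> r" using A'_mem by blast
  have c: "a \<in> carrier R" "r \<in> carrier R" using ar ac Rad_carr by auto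
  have eqN: "N +> b = N +> a" if N: "maximalideal N R" for N
  proof -
    have "b \<ominus> a = r" using c ar(3) by (simp add: a_minus_def) algebra
    then have "b \<ominus> a \<in> N" using ar(2) N Rad_mem by auto
    then show ?thesis using quotient_eq_iff_same_a_r_cos[OF max_ideal[OF N] b c(1)] by simp
  qed
  have ?P
  proof (intro allI impI)
    fix N assume N: "maximalideal N R"
    have "N +> b = res_map R N (m +> a)" using eqN[OF N] rm[OF max_ideal[OF N] m_in_N[OF N] ar(1)] by simp
    moreover have "m +> a \<in> carrier (R\<lparr>carrier := A\<rparr> Quot m)" using quot_I[OF ar(1)] .
    ultimately show "N +> b \<in> res_map R N ` carrier (R\<lparr>carrier := A\<rparr> Quot m)" by blast
  qed
  moreover have ?Q using eqN inv_N ar(1) by simp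
  ultimately show "?P \<and> ?Q" by blast
next
  assume PQ: "?P \<and> ?Q"
  obtain M0 where M0: "maximalideal M0 R" using ex_max by blast
  have ex: "\<exists>a\<in>A. N +> b = N +> a" if N: "maximalideal N R" for N
  proof -
    have "N +> b \<in> res_map R N ` carrier (R\<lparr>carrier := A\<rparr> Quot m)" using PQ N by blast
    then obtain U where U: "U \<in> carrier (R\<lparr>carrier := A\<rparr> Quot m)" "N +> b = res_map R N U"
      by (rule imageE) (rule that, auto)
    obtain a where "a \<in> A" "U = m +> a" using quot_E[OF U(1)] by blast
    then have "a \<in> A" "N +> b = res_map R N (m +> a)" using U by auto
    then show ?thesis using rm[OF max_ideal[OF N] m_in_N[OF N]] by auto
  qed
  obtain a where a: "a \<in> A" "M0 +> b = M0 +> a" using ex[OF M0] by blast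
  have "b \<ominus> a \<in> N" if N: "maximalideal N R" for N
  proof -
    interpret N: ideal N R by (rule max_ideal[OF N])
    obtain aN where aN: "aN \<in> A" "N +> b = N +> aN" using ex[OF N] by blast
    have "the_inv_into (carrier ((R\<lparr>carrier := A\<rparr>) Quot m)) (res_map R N) (N +> b)
        = the_inv_into (carrier ((R\<lparr>carrier := A\<rparr>) Quot m)) (res_map R M0) (M0 +> b)"
      using PQ N M0 by blast
    then have "m +> aN = m +> a"
      unfolding aN(2) a(2) inv_N[OF N aN(1)] inv_N[OF M0 a(1)] .
    then have "aN \<ominus> a \<in> m" using sub_rcos_eq[OF A_sub m_ideal aN(1) a(1)] by simp
    then have d1: "aN \<ominus> a \<in> N" using m_in_N[OF N] by blast
    have d2: "b \<ominus> aN \<in> N" using quotient_eq_iff_same_a_r_cos[OF N.is_ideal b ac[OF aN(1)]] aN by simp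
    have "(b \<ominus> aN) \<oplus> (aN \<ominus> a) \<in> N" using d1 d2 N.a_closed by blast
    moreover have "(b \<ominus> aN) \<oplus> (aN \<ominus> a) = b \<ominus> a"
      using b ac[OF aN(1)] ac[OF a(1)] by (simp add: a_minus_def) algebra
    ultimately show ?thesis by simp
  qed
  moreover have "b \<ominus> a \<in> carrier R" using b ac[OF a(1)] by (simp add: a_minus_def)
  ultimately have r: "b \<ominus> a \<in> Rad" unfolding Rad_mem by blast
  have "b = a \<oplus> (b \<ominus> a)" using b ac[OF a(1)] by (simp add: a_minus_def) algebra
  then show "b \<in> A'" unfolding A'_mem using a(1) r by blast
qed

end


theorem mainTheorem1:
  fixes B :: "('a, 'c) ring_scheme" and A m :: "'a set"
  assumes "cring B"
    and "integral_extension B A"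
    and "local_ring_with (B\<lparr>carrier := A\<rparr>) m"
  shows
    "(local_ring_with (B\<lparr>carrier := A <+>\<^bsub>B\<^esub> jacobson_radical B\<rparr>) (jacobson_radical B)
      \<and> res_map B (jacobson_radical B) \<in>
         ring_iso ((B\<lparr>carrier := A\<rparr>) Quot m)
                  ((B\<lparr>carrier := A <+>\<^bsub>B\<^esub> jacobson_radical B\<rparr>) Quot (jacobson_radical B)))
     \<and> (\<forall>C n. subring C B \<longrightarrow> A \<subseteq> C \<longrightarrow> local_ring_with (B\<lparr>carrier := C\<rparr>) n \<longrightarrow>
       res_map B n \<in> ring_iso ((B\<lparr>carrier := A\<rparr>) Quot m) ((B\<lparr>carrier := C\<rparr>) Quot n) \<longrightarrow>
       C \<subseteq> A <+>\<^bsub>B\<^esub> jacobson_radical B)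
     \<and> (\<forall>b \<in> carrier B.
       b \<in> A <+>\<^bsub>B\<^esub> jacobson_radical B \<longleftrightarrow>
       ((\<forall>n. maximalideal n B \<longrightarrow>
            n +>\<^bsub>B\<^esub> b \<in> res_map B n ` carrier ((B\<lparr>carrier := A\<rparr>) Quot m))
        \<and> (\<forall>n1 n2. maximalideal n1 B \<longrightarrow> maximalideal n2 B \<longrightarrow>
            the_inv_into (carrier ((B\<lparr>carrier := A\<rparr>) Quot m)) (res_map B n1) (n1 +>\<^bsub>B\<^esub> b)
            = the_inv_into (carrier ((B\<lparr>carrier := A\<rparr>) Quot m)) (res_map B n2) (n2 +>\<^bsub>B\<^esub> b))))"
proof -
  interpret S: setting B A m
    by (intro setting.intro setting_axioms.intro) (use assms in auto)
  have R: "S.Rad = jacobson_radical B" by (rule S.Rad_def)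
  have p1: "local_ring_with (B\<lparr>carrier := A <+>\<^bsub>B\<^esub> jacobson_radical B\<rparr>) (jacobson_radical B)"
    using S.part1a unfolding R .
  have p2: "res_map B (jacobson_radical B) \<in>
         ring_iso ((B\<lparr>carrier := A\<rparr>) Quot m)
                  ((B\<lparr>carrier := A <+>\<^bsub>B\<^esub> jacobson_radical B\<rparr>) Quot (jacobson_radical B))"
    using S.part1b unfolding R .
  have p3: "\<forall>C n. subring C B \<longrightarrow> A \<subseteq> C \<longrightarrow> local_ring_with (B\<lparr>carrier := C\<rparr>) n \<longrightarrow>
       res_map B n \<in> ring_iso ((B\<lparr>carrier := A\<rparr>) Quot m) ((B\<lparr>carrier := C\<rparr>) Quot n) \<longrightarrow>
       C \<subseteq> A <+>\<^bsub>B\<^esub> jacobson_radical B"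
    using S.part2 unfolding R by blast
  have p4: "\<forall>b \<in> carrier B.
       b \<in> A <+>\<^bsub>B\<^esub> jacobson_radical B \<longleftrightarrow>
       ((\<forall>n. maximalideal n B \<longrightarrow>
            n +>\<^bsub>B\<^esub> b \<in> res_map B n ` carrier ((B\<lparr>carrier := A\<rparr>) Quot m))
        \<and> (\<forall>n1 n2. maximalideal n1 B \<longrightarrow> maximalideal n2 B \<longrightarrow>
            the_inv_into (carrier ((B\<lparr>carrier := A\<rparr>) Quot m)) (res_map B n1) (n1 +>\<^bsub>B\<^esub> b)
            = the_inv_into (carrier ((B\<lparr>carrier := A\<rparr>) Quot m)) (res_map B n2) (n2 +>\<^bsub>B\<^esub> b)))"
    using S.part3 unfolding R by blast
  show ?thesis using p1 p2 p3 p4 by (intro conjI)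
qed


end
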